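(* Let $I$ be a finite or infinite non-empty index set and let $\mathbb{K}$ be a positive commutative monoid. The following are equivalent: (1) $\mathbb{K}$ has the transportation property; (2) $\mathbb{K}^I$ has the transportation property; (3) $\mathbb{K}^I_{\mathrm{fin}}$ has the transportation property.
   Context: Positive: $p+q=0\Rightarrow p=q=0$. $\mathbb{K}^I$ is the monoid of all maps $f:I\to K$ with pointwise addition $(f+g)(i)=f(i)+g(i)$ and the constant-$0$ map as neutral element; $\mathbb{K}^I_{\mathrm{fin}}$ is its submonoid of maps $f$ with $f(i)\ne0$ for only finitely many $i$. A monoid $(M,+,0)$ has the transportation property if for all positive integers $m,n$ and all $b\in M^m$, $c\in M^n$ with $b_1+\dots+b_m=c_1+\dots+c_n$ there is $(d_{ij})\in M^{m\times n}$ with $\sum_j d_{ij}=b_i$ for all $i$ and $\sum_i d_{ij}=c_j$ for all $j$. *)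

theory Defs
  imports Main "HOL-Library.Function_Algebras"
begin

definition positive_monoid :: "'a::comm_monoid_add itself \<Rightarrow> bool" where
  "positive_monoid _ \<longleftrightarrow> (\<forall>p q :: 'a. p + q = 0 \<longrightarrow> p = 0 \<and> q = 0)"

text \<open>Indices run over
  0..<m and 0..<n instead of 1..m and 1..n.\<close>
definition transportation_property :: "'a::comm_monoid_add set \<Rightarrow> bool" where
  "transportation_property M \<longleftrightarrow>
     (\<forall>(m::nat) (n::nat) (b::nat \<Rightarrow> 'a) (c::nat \<Rightarrow> 'a).
        0 < m \<and> 0 < n \<and> (\<forall>i<m. b i \<in> M) \<and> (\<forall>j<n. c j \<in> M) \<and>
        (\<Sum>i<m. b i) = (\<Sum>j<n. c j) \<longrightarrow>
        (\<exists>d :: nat \<Rightarrow> nat \<Rightarrow> 'a.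
           (\<forall>i<m. \<forall>j<n. d i j \<in> M) \<and>
           (\<forall>i<m. (\<Sum>j<n. d i j) = b i) \<and>
           (\<forall>j<n. (\<Sum>i<m. d i j) = c j)))"

definition fin_support :: "('i \<Rightarrow> 'k::zero) set" where
  "fin_support = {f. finite {i. f i \<noteq> 0}}"

end

theory Submission
  imports Defs
begin

lemma sum_app: "(\<Sum>i\<in>A. f i) (x::'i) = (\<Sum>i\<in>A. (f i x :: 'k::comm_monoid_add))"
  by (induction A rule: infinite_finite_induct) (auto simp: plus_fun_def zero_fun_def)

lemma pos_sum0:
  assumes "positive_monoid TYPE('k::comm_monoid_add)" "finite A"
    "(\<Sum>i\<in>A. (f i :: 'k)) = 0" "j \<in> A"
  shows "f j = 0"
  using assms(2,3,4)
proof (induction A rule: finite_induct)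
  case (insert a F)
  then have "f a + sum f F = 0" by simp
  then have "f a = 0 \<and> sum f F = 0" using assms(1) unfolding positive_monoid_def by blast
  then show ?case using insert by auto
qed simp

lemma pointwise:
  assumes pos: "positive_monoid TYPE('k::comm_monoid_add)"
    and tp: "transportation_property (UNIV :: 'k set)"
    and M: "M = (UNIV :: ('i \<Rightarrow> 'k) set) \<or> M = fin_support"
  shows "transportation_property M"
  unfolding transportation_property_def
proof (intro allI impI)
  fix m n and b c :: "nat \<Rightarrow> 'i \<Rightarrow> 'k"
  assume h: "0 < m \<and> 0 < n \<and> (\<forall>i<m. b i \<in> M) \<and> (\<forall>j<n. c j \<in> M) \<and> (\<Sum>i<m. b i) = (\<Sum>j<n. c j)"
  have ex: "\<forall>x. \<exists>d :: nat \<Rightarrow> nat \<Rightarrow> 'k.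
           (\<forall>i<m. (\<Sum>j<n. d i j) = b i x) \<and> (\<forall>j<n. (\<Sum>i<m. d i j) = c j x)"
  proof
    fix x
    have "(\<Sum>i<m. b i x) = (\<Sum>j<n. c j x)"
      using h sum_app[of b "{..<m}" x] sum_app[of c "{..<n}" x] by simp
    then show "\<exists>d :: nat \<Rightarrow> nat \<Rightarrow> 'k.
           (\<forall>i<m. (\<Sum>j<n. d i j) = b i x) \<and> (\<forall>j<n. (\<Sum>i<m. d i j) = c j x)"
      using tp[unfolded transportation_property_def, rule_format, of m n "\<lambda>i. b i x" "\<lambda>j. c j x"] h by auto
  qed
  obtain D where D: "\<And>x. (\<forall>i<m. (\<Sum>j<n. D x i j) = b i x) \<and> (\<forall>j<n. (\<Sum>i<m. D x i j) = c j x)"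
    using choice[OF ex] by blast
  define d where "d = (\<lambda>i j x. D x i j)"
  have r: "\<forall>i<m. (\<Sum>j<n. d i j) = b i"
    using D by (auto simp: d_def fun_eq_iff sum_app)
  have co: "\<forall>j<n. (\<Sum>i<m. d i j) = c j"
    using D by (auto simp: d_def fun_eq_iff sum_app)
  have "\<forall>i<m. \<forall>j<n. d i j \<in> M"
  proof (intro allI impI)
    fix i j assume ij: "i < m" "j < n"
    show "d i j \<in> M"
    proof (cases "M = UNIV")
      case True then show ?thesis by simp
    next
      case False
      then have Mf: "M = fin_support" using M by blast
      have "{x. d i j x \<noteq> 0} \<subseteq> {x. b i x \<noteq> 0}"
      proof
        fix x assume "x \<in> {x. d i j x \<noteq> 0}"
        moreover have "b i x = 0 \<Longrightarrow> d i j x = 0"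
          using pos_sum0[OF pos, of "{..<n}" "\<lambda>j. D x i j" j] D[of x] ij by (auto simp: d_def)
        ultimately show "x \<in> {x. b i x \<noteq> 0}" by auto
      qed
      moreover have "finite {x. b i x \<noteq> 0}" using h ij Mf by (auto simp: fin_support_def)
      ultimately show ?thesis using Mf by (auto simp: fin_support_def intro: finite_subset)
    qed
  qed
  then show "\<exists>d. (\<forall>i<m. \<forall>j<n. d i j \<in> M) \<and> (\<forall>i<m. (\<Sum>j<n. d i j) = b i) \<and> (\<forall>j<n. (\<Sum>i<m. d i j) = c j)"
    using r co by blast
qed

lemma embed_back:
  assumes tp: "transportation_property M"
    and emb: "\<And>k::'k::comm_monoid_add. (\<lambda>x::'i. if x = x0 then k else 0) \<in> M"
  shows "transportation_property (UNIV :: 'k set)"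
  unfolding transportation_property_def
proof (intro allI impI)
  fix m n and b c :: "nat \<Rightarrow> 'k"
  assume h: "0 < m \<and> 0 < n \<and> (\<forall>i<m. b i \<in> UNIV) \<and> (\<forall>j<n. c j \<in> UNIV) \<and> (\<Sum>i<m. b i) = (\<Sum>j<n. c j)"
  define B where "B = (\<lambda>i (x::'i). if x = x0 then b i else 0)"
  define C where "C = (\<lambda>j (x::'i). if x = x0 then c j else 0)"
  have "(\<Sum>i<m. B i) = (\<Sum>j<n. C j)"
  proof (rule ext)
    fix x show "(\<Sum>i<m. B i) x = (\<Sum>j<n. C j) x"
      using h by (cases "x = x0") (simp_all add: sum_app B_def C_def)
  qed
  moreover have "\<forall>i<m. B i \<in> M" "\<forall>j<n. C j \<in> M" by (simp_all add: B_def C_def emb)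
  ultimately have P: "0 < m \<and> 0 < n \<and> (\<forall>i<m. B i \<in> M) \<and> (\<forall>j<n. C j \<in> M) \<and> (\<Sum>i<m. B i) = (\<Sum>j<n. C j)"
    using h by simp
  obtain D where D: "(\<forall>i<m. (\<Sum>j<n. D i j) = B i)" "(\<forall>j<n. (\<Sum>i<m. D i j) = C j)"
    using tp[unfolded transportation_property_def, rule_format, of m n B C, OF P] by blast
  have "(\<Sum>j<n. D i j x0) = b i" if "i < m" for i
  proof -
    have "(\<Sum>j<n. D i j) x0 = B i x0" using D(1) that by simp
    then show ?thesis by (simp add: sum_app B_def)
  qed
  moreover have "(\<Sum>i<m. D i j x0) = c j" if "j < n" for j
  proof -
    have "(\<Sum>i<m. D i j) x0 = C j x0" using D(2) that by simp
    then show ?thesis by (simp add: sum_app C_def)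
  qed
  ultimately show "\<exists>d. (\<forall>i<m. \<forall>j<n. d i j \<in> UNIV) \<and> (\<forall>i<m. (\<Sum>j<n. d i j) = b i) \<and> (\<forall>j<n. (\<Sum>i<m. d i j) = c j)"
    by (intro exI[of _ "\<lambda>i j. D i j x0"]) auto
qed

theorem proposition30:
  assumes "positive_monoid TYPE('k::comm_monoid_add)"
  shows "(transportation_property (UNIV :: 'k set)
            \<longleftrightarrow> transportation_property (UNIV :: ('i \<Rightarrow> 'k) set))
       \<and> (transportation_property (UNIV :: 'k set)
            \<longleftrightarrow> transportation_property (fin_support :: ('i \<Rightarrow> 'k) set))"
proof -
  have fs: "(\<lambda>x::'i. if x = undefined then k else (0::'k)) \<in> fin_support" for k
  proof -
    have "{x::'i. (if x = undefined then k else (0::'k)) \<noteq> 0} \<subseteq> {undefined}" by auto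
    then show ?thesis unfolding fin_support_def by (auto intro: finite_subset)
  qed
  have a: "transportation_property (UNIV :: 'k set) \<Longrightarrow> transportation_property (UNIV :: ('i \<Rightarrow> 'k) set)"
    using pointwise[OF assms, of "UNIV :: ('i \<Rightarrow> 'k) set"] by simp
  have b: "transportation_property (UNIV :: 'k set) \<Longrightarrow> transportation_property (fin_support :: ('i \<Rightarrow> 'k) set)"
    using pointwise[OF assms, of "fin_support :: ('i \<Rightarrow> 'k) set"] by simp
  have c: "transportation_property (UNIV :: ('i \<Rightarrow> 'k) set) \<Longrightarrow> transportation_property (UNIV :: 'k set)"
    by (rule embed_back[of _ undefined]) auto
  have d: "transportation_property (fin_support :: ('i \<Rightarrow> 'k) set) \<Longrightarrow> transportation_property (UNIV :: 'k set)"
    by (rule embed_back[of _ undefined]) (auto intro: fs)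
  show ?thesis using a b c d by blast
qed

end
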